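(* Let $t\ge 3$ and let $\mathcal{H}$ be an $n$-vertex $3$-uniform hypergraph that does not contain $K_{2,t}$ as a trace. Let $A$ be the set of edges of $\mathcal{H}$ containing at least one pair of vertices whose co-degree in $\mathcal{H}$ is $1$, and let $B=\mathcal{H}\setminus A$. For a vertex $x$, let $N_1(x)=\{z: \exists e\in B,\ \{x,z\}\subseteq e\}$ and $N_2(x)=\{z\notin N_1(x)\cup\{x\}: \exists e\in B,\ z\in e,\ e\cap N_1(x)\neq\emptyset\}$. Fix a vertex $v$, and for $u\in N_1(v)$ let $E_u=\{e\in B: e\cap N_1(v)=\{u\}\}$ and $V_u=\{w\in N_2(v): \exists e\in E_u,\ w\in e\}$. If $\{v,u,w\}\in B$ is any edge containing $v$, then $|V_u\cap V_w|\le (t-1)(6t-2)$.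
   Context: A hypergraph $\mathcal{H}$ contains a graph $F$ (vertices $v_1,\dots,v_p$, edges $e_1,\dots,e_q$) as a trace if there exist distinct vertices $w_1,\dots,w_p\in V(\mathcal{H})$ and distinct edges $f_1,\dots,f_q\in E(\mathcal{H})$ such that whenever $e_i=v_\alpha v_\beta$, $f_i\cap\{w_1,\dots,w_p\}=\{w_\alpha,w_\beta\}$. The co-degree of a pair $\{x,y\}$ in $\mathcal{H}$ is the number of edges of $\mathcal{H}$ containing $\{x,y\}$. $\mathcal{H}\setminus A$ denotes the hypergraph on $V(\mathcal{H})$ with edge set $E(\mathcal{H})\setminus A$. *)

theory Defs
  imports Main
begin

definition uniform3 :: "'a set \<Rightarrow> 'a set set \<Rightarrow> bool" where
  "uniform3 V E \<longleftrightarrow> finite V \<and> (\<forall>e\<in>E. e \<subseteq> V \<and> card e = 3)"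

definition contains_trace :: "'a set \<Rightarrow> 'a set set \<Rightarrow> 'b set \<Rightarrow> 'b set set \<Rightarrow> bool" where
  "contains_trace V E VF EF \<longleftrightarrow>
     (\<exists>\<phi> \<psi>. inj_on \<phi> VF \<and> \<phi> ` VF \<subseteq> V \<and> inj_on \<psi> EF \<and> \<psi> ` EF \<subseteq> E \<and>
            (\<forall>f\<in>EF. \<psi> f \<inter> \<phi> ` VF = \<phi> ` f))"

(* K_{2,t}: parts {0,1} and {2,...,t+1} *)
definition K2t_vertices :: "nat \<Rightarrow> nat set" where
  "K2t_vertices t = {0..<t+2}"

definition K2t_edges :: "nat \<Rightarrow> nat set set" where
  "K2t_edges t = {{i, j} | i j. i < 2 \<and> 2 \<le> j \<and> j < t + 2}"

definition codeg :: "'a set set \<Rightarrow> 'a \<Rightarrow> 'a \<Rightarrow> nat" where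
  "codeg E x y = card {e\<in>E. {x, y} \<subseteq> e}"

definition setA :: "'a set set \<Rightarrow> 'a set set" where
  "setA E = {e\<in>E. \<exists>x y. x \<noteq> y \<and> {x, y} \<subseteq> e \<and> codeg E x y = 1}"

definition setB :: "'a set set \<Rightarrow> 'a set set" where
  "setB E = E - setA E"

definition N1 :: "'a set set \<Rightarrow> 'a \<Rightarrow> 'a set" where
  "N1 B x = {z. z \<noteq> x \<and> (\<exists>e\<in>B. {x, z} \<subseteq> e)}"

definition N2 :: "'a set set \<Rightarrow> 'a \<Rightarrow> 'a set" where
  "N2 B x = {z. z \<notin> N1 B x \<union> {x} \<and> (\<exists>e\<in>B. z \<in> e \<and> e \<inter> N1 B x \<noteq> {})}"

definition Eu :: "'a set set \<Rightarrow> 'a \<Rightarrow> 'a \<Rightarrow> 'a set set" where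
  "Eu B v u = {e\<in>B. e \<inter> N1 B v = {u}}"

definition Vu :: "'a set set \<Rightarrow> 'a \<Rightarrow> 'a \<Rightarrow> 'a set" where
  "Vu B v u = {w\<in>N2 B v. \<exists>e\<in>Eu B v u. w \<in> e}"

end

theory Submission
  imports Defs
begin

lemma fiber_sum:
  fixes g :: "'a \<Rightarrow> 'a"
  assumes "finite S"
  shows "(\<Sum>x\<in>S. card {y\<in>S. g y = x}) \<le> card S"
proof -
  have "(\<Sum>x\<in>S. card {y\<in>S. g y = x}) = card (\<Union>x\<in>S. {y\<in>S. g y = x})"
    by (rule card_UN_disjoint[symmetric]) (use assms in auto)
  also have "\<dots> \<le> card S" by (rule card_mono) (use assms in auto)
  finally show ?thesis .
qed

lemma low_indeg:
  fixes g1 g2 :: "'a \<Rightarrow> 'a"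
  assumes "finite S" "S \<noteq> {}"
  shows "\<exists>x\<in>S. card {y\<in>S. g1 y = x \<or> g2 y = x} \<le> 2"
proof (rule ccontr)
  assume "\<not> ?thesis"
  hence h: "\<forall>x\<in>S. 3 \<le> card {y\<in>S. g1 y = x \<or> g2 y = x}" by auto
  have "3 * card S = (\<Sum>x\<in>S. 3)" by simp
  also have "\<dots> \<le> (\<Sum>x\<in>S. card {y\<in>S. g1 y = x \<or> g2 y = x})"
    by (rule sum_mono) (use h in auto)
  also have "\<dots> \<le> (\<Sum>x\<in>S. card {y\<in>S. g1 y = x} + card {y\<in>S. g2 y = x})"
  proof (rule sum_mono)
    fix x assume "x \<in> S"
    have "{y\<in>S. g1 y = x \<or> g2 y = x} = {y\<in>S. g1 y = x} \<union> {y\<in>S. g2 y = x}" by auto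
    thus "card {y\<in>S. g1 y = x \<or> g2 y = x} \<le> card {y\<in>S. g1 y = x} + card {y\<in>S. g2 y = x}"
      by (simp add: card_Un_le)
  qed
  also have "\<dots> \<le> card S + card S"
    unfolding sum.distrib using fiber_sum[OF assms(1)] by (meson add_mono)
  finally show False using assms card_gt_0_iff by fastforce
qed

lemma indep:
  fixes g1 g2 :: "'a \<Rightarrow> 'a"
  assumes "finite S" "\<forall>x\<in>S. g1 x \<noteq> x \<and> g2 x \<noteq> x"
  shows "\<exists>T\<subseteq>S. card S \<le> 5 * card T \<and> (\<forall>x\<in>T. g1 x \<notin> T \<and> g2 x \<notin> T)"
  using assms
proof (induction "card S" arbitrary: S rule: less_induct)
  case less
  show ?case
  proof (cases "S = {}")
    case True thus ?thesis by auto
  next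
    case False
    obtain x where x: "x \<in> S" and xd: "card {y\<in>S. g1 y = x \<or> g2 y = x} \<le> 2"
      using low_indeg[OF less(2) False] by blast
    define R where "R = {x, g1 x, g2 x} \<union> {y\<in>S. g1 y = x \<or> g2 y = x}"
    have cR: "card R \<le> 5"
    proof -
      have "card R \<le> card {x, g1 x, g2 x} + card {y\<in>S. g1 y = x \<or> g2 y = x}"
        unfolding R_def by (rule card_Un_le)
      also have "card {x, g1 x, g2 x} \<le> 3" by (simp add: card_insert_le_m1)
      finally show ?thesis using xd by linarith
    qed
    have xR: "x \<in> R" unfolding R_def by auto
    have fR: "finite R" unfolding R_def using less(2) by auto
    let ?S' = "S - R"
    have lt: "card ?S' < card S"
      by (rule psubset_card_mono) (use less(2) x xR in auto)
    obtain T' where T': "T' \<subseteq> ?S'" "card ?S' \<le> 5 * card T'"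
      "\<forall>y\<in>T'. g1 y \<notin> T' \<and> g2 y \<notin> T'"
      using less(1)[OF lt] less(2,3) by auto
    have xT': "x \<notin> T'" using T'(1) xR by auto
    have fT': "finite T'" using T'(1) less(2) finite_subset by blast
    have "card S \<le> card (?S' \<union> R)"
      by (rule card_mono) (use less(2) fR in auto)
    also have "\<dots> \<le> card ?S' + card R" by (rule card_Un_le)
    finally have "card S \<le> card ?S' + card R" .
    hence c: "card S \<le> 5 * card (insert x T')"
      using T'(2) cR fT' xT' by simp
    have ind: "\<forall>y\<in>insert x T'. g1 y \<notin> insert x T' \<and> g2 y \<notin> insert x T'"
    proof
      fix y assume y: "y \<in> insert x T'"
      show "g1 y \<notin> insert x T' \<and> g2 y \<notin> insert x T'"
      proof (cases "y = x")
        case True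
        then show ?thesis using T'(1) less(3) x unfolding R_def by auto
      next
        case False
        hence "y \<in> T'" using y by auto
        thus ?thesis using T' unfolding R_def by auto
      qed
    qed
    show ?thesis
      by (rule exI[of _ "insert x T'"]) (use T'(1) x c ind in auto)
  qed
qed

lemma third:
  assumes "card e = 3" "a \<in> e" "b \<in> e" "a \<noteq> b"
  shows "\<exists>y. e = {a, b, y} \<and> y \<noteq> a \<and> y \<noteq> b"
proof -
  have fe: "finite e" by (rule card_ge_0_finite) (simp add: assms(1))
  have "card (e - {a, b}) = 1" using assms fe by (simp add: card_Diff_subset)
  then obtain y where y: "e - {a, b} = {y}" by (meson card_1_singletonE)
  hence "e = {a, b, y}" using assms(2,3) by blast
  thus ?thesis using y by blast
qed

theorem mainTheorem6:
  fixes V :: "'a set" and E :: "'a set set" and t :: nat and v u w :: 'a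
  assumes "t \<ge> 3"
    and "uniform3 V E"
    and "\<not> contains_trace V E (K2t_vertices t) (K2t_edges t)"
    and "{v, u, w} \<in> setB E"
  shows "card (Vu (setB E) v u \<inter> Vu (setB E) v w) \<le> (t - 1) * (6 * t - 2)"
proof (rule ccontr)
  define B where "B = setB E"
  define S where "S = Vu B v u \<inter> Vu B v w"
  assume "\<not> ?thesis"
  hence big: "card S > (t - 1) * (6 * t - 2)" unfolding S_def B_def by simp
  have BE: "B \<subseteq> E" unfolding B_def setB_def by auto
  have edges: "\<forall>e\<in>E. e \<subseteq> V \<and> card e = 3" using assms(2) unfolding uniform3_def by auto
  have vuwB: "{v, u, w} \<in> B" using assms(4) B_def by simp
  have c3: "card {v, u, w} = 3" using edges vuwB BE by auto
  have dist: "v \<noteq> u" "v \<noteq> w" "u \<noteq> w"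
  proof -
    have c2: "card {a, b} \<le> 2" for a b :: 'a by (cases "a = b") auto
    show "v \<noteq> u" proof assume "v = u" hence "{v, u, w} = {u, w}" by auto
      thus False using c3 c2[of u w] by simp qed
    show "v \<noteq> w" proof assume "v = w" hence "{v, u, w} = {u, w}" by auto
      thus False using c3 c2[of u w] by simp qed
    show "u \<noteq> w" proof assume "u = w" hence "{v, u, w} = {v, w}" by auto
      thus False using c3 c2[of v w] by simp qed
  qed
  have vuwE: "{v, u, w} \<in> E" using vuwB BE by auto
  have "{v, u, w} \<subseteq> V" using bspec[OF edges vuwE] by simp
  hence uV: "u \<in> V" and wV: "w \<in> V" by auto
  have uN: "u \<in> N1 B v" unfolding N1_def using vuwB dist by blast
  have wN: "w \<in> N1 B v" unfolding N1_def using vuwB dist by blast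
  have Sprop: "\<forall>x\<in>S. x \<notin> N1 B v \<and> x \<noteq> v \<and>
      (\<exists>e\<in>B. e \<inter> N1 B v = {u} \<and> x \<in> e) \<and> (\<exists>e\<in>B. e \<inter> N1 B v = {w} \<and> x \<in> e)"
  proof
    fix x assume "x \<in> S"
    hence x1: "x \<in> Vu B v u" "x \<in> Vu B v w" by (auto simp: S_def)
    hence "x \<in> N2 B v" by (simp add: Vu_def)
    hence a: "x \<notin> N1 B v \<and> x \<noteq> v" by (simp add: N2_def)
    have b: "\<exists>e\<in>B. e \<inter> N1 B v = {u} \<and> x \<in> e"
      using x1(1) unfolding Vu_def Eu_def by auto
    have c: "\<exists>e\<in>B. e \<inter> N1 B v = {w} \<and> x \<in> e"
      using x1(2) unfolding Vu_def Eu_def by auto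
    show "x \<notin> N1 B v \<and> x \<noteq> v \<and>
      (\<exists>e\<in>B. e \<inter> N1 B v = {u} \<and> x \<in> e) \<and> (\<exists>e\<in>B. e \<inter> N1 B v = {w} \<and> x \<in> e)"
      using a b c by blast
  qed
  have ex1: "\<forall>x\<in>S. \<exists>e. e \<in> B \<and> e \<inter> N1 B v = {u} \<and> x \<in> e"
  proof
    fix x assume "x \<in> S"
    hence "\<exists>e\<in>B. e \<inter> N1 B v = {u} \<and> x \<in> e" using Sprop by simp
    then obtain e where "e \<in> B" "e \<inter> N1 B v = {u}" "x \<in> e" by (elim bexE conjE)
    thus "\<exists>e. e \<in> B \<and> e \<inter> N1 B v = {u} \<and> x \<in> e" by (intro exI conjI)
  qed
  from bchoice[OF ex1] obtain e1 where e1: "\<forall>x\<in>S. e1 x \<in> B \<and> e1 x \<inter> N1 B v = {u} \<and> x \<in> e1 x"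
    by (elim exE)
  have ex2: "\<forall>x\<in>S. \<exists>e. e \<in> B \<and> e \<inter> N1 B v = {w} \<and> x \<in> e"
  proof
    fix x assume "x \<in> S"
    hence "\<exists>e\<in>B. e \<inter> N1 B v = {w} \<and> x \<in> e" using Sprop by simp
    then obtain e where "e \<in> B" "e \<inter> N1 B v = {w}" "x \<in> e" by (elim bexE conjE)
    thus "\<exists>e. e \<in> B \<and> e \<inter> N1 B v = {w} \<and> x \<in> e" by (intro exI conjI)
  qed
  from bchoice[OF ex2] obtain e2 where e2: "\<forall>x\<in>S. e2 x \<in> B \<and> e2 x \<inter> N1 B v = {w} \<and> x \<in> e2 x"
    by (elim exE)
  define g1 where "g1 x = (SOME y. e1 x = {u, x, y} \<and> y \<noteq> u \<and> y \<noteq> x)" for x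
  define g2 where "g2 x = (SOME y. e2 x = {w, x, y} \<and> y \<noteq> w \<and> y \<noteq> x)" for x
  have g1P: "e1 x = {u, x, g1 x} \<and> g1 x \<noteq> u \<and> g1 x \<noteq> x \<and> g1 x \<notin> N1 B v" if "x \<in> S" for x
  proof -
    have "x \<noteq> u" using Sprop that uN by auto
    moreover have "card (e1 x) = 3" using e1 that edges BE by auto
    moreover have "u \<in> e1 x" "x \<in> e1 x" using e1 that by auto
    ultimately have "\<exists>y. e1 x = {u, x, y} \<and> y \<noteq> u \<and> y \<noteq> x" using third by metis
    hence h: "e1 x = {u, x, g1 x} \<and> g1 x \<noteq> u \<and> g1 x \<noteq> x"
      unfolding g1_def by (rule someI_ex)
    moreover have "g1 x \<notin> N1 B v"
    proof
      assume "g1 x \<in> N1 B v"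
      hence "g1 x \<in> e1 x \<inter> N1 B v" using h by auto
      thus False using e1 that h by auto
    qed
    ultimately show ?thesis by blast
  qed
  have g2P: "e2 x = {w, x, g2 x} \<and> g2 x \<noteq> w \<and> g2 x \<noteq> x \<and> g2 x \<notin> N1 B v" if "x \<in> S" for x
  proof -
    have "x \<noteq> w" using Sprop that wN by auto
    moreover have "card (e2 x) = 3" using e2 that edges BE by auto
    moreover have "w \<in> e2 x" "x \<in> e2 x" using e2 that by auto
    ultimately have "\<exists>y. e2 x = {w, x, y} \<and> y \<noteq> w \<and> y \<noteq> x" using third by metis
    hence h: "e2 x = {w, x, g2 x} \<and> g2 x \<noteq> w \<and> g2 x \<noteq> x"
      unfolding g2_def by (rule someI_ex)
    moreover have "g2 x \<notin> N1 B v"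
    proof
      assume "g2 x \<in> N1 B v"
      hence "g2 x \<in> e2 x \<inter> N1 B v" using h by auto
      thus False using e2 that h by auto
    qed
    ultimately show ?thesis by blast
  qed
  have finS: "finite S" by (rule ccontr) (use big in simp)
  obtain T where T: "T \<subseteq> S" "card S \<le> 5 * card T" "\<forall>x\<in>T. g1 x \<notin> T \<and> g2 x \<notin> T"
    using indep[OF finS, of g1 g2] g1P g2P by auto
  have "(t - 1) * 5 \<le> (t - 1) * (6 * t - 2)" using assms(1) by (intro mult_le_mono2) auto
  hence "t \<le> card T" using big T(2) by linarith
  then obtain T' where T': "T' \<subseteq> T" "card T' = t"
    by (meson obtain_subset_with_card_n)
  have T'S: "T' \<subseteq> S" using T'(1) T(1) by (rule subset_trans)
  have finT': "finite T'" by (rule finite_subset[OF T'S finS])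
  obtain xs where xs: "set xs = T'" "distinct xs" using finite_distinct_list[OF finT'] by (elim exE conjE)
  have lxs: "length xs = t" using distinct_card[OF xs(2)] xs(1) T'(2) by simp
  have T'N: "x \<notin> N1 B v" if "x \<in> T'" for x
  proof -
    have "x \<in> S" using that T'S by (rule subsetD[rotated])
    thus ?thesis using Sprop by simp
  qed
  have T'uw: "u \<notin> T'" "w \<notin> T'" using T'N uN wN by auto
  have indT': "\<forall>x\<in>T'. g1 x \<notin> T' \<and> g2 x \<notin> T'"
  proof
    fix x assume "x \<in> T'"
    hence "x \<in> T" using T'(1) by auto
    hence "g1 x \<notin> T \<and> g2 x \<notin> T" using T(3) by simp
    thus "g1 x \<notin> T' \<and> g2 x \<notin> T'" using T'(1) by auto
  qed
  define \<phi> where "\<phi> j = (if j = 0 then u else if j = Suc 0 then w else xs ! (j - 2))" for j :: nat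
  define \<psi> where "\<psi> f = (if (0::nat) \<in> f then e1 (\<phi> (Max f)) else e2 (\<phi> (Max f)))" for f
  let ?VF = "K2t_vertices t" and ?EF = "K2t_edges t"
  have img: "\<phi> ` ?VF = {u, w} \<union> T'"
  proof
    show "\<phi> ` ?VF \<subseteq> {u, w} \<union> T'"
    proof
      fix y assume "y \<in> \<phi> ` ?VF"
      then obtain j where j: "j < t + 2" "y = \<phi> j" unfolding K2t_vertices_def by auto
      show "y \<in> {u, w} \<union> T'"
      proof (cases "j < 2")
        case True thus ?thesis using j \<phi>_def by auto
      next
        case False
        hence "y = xs ! (j - 2)" "j - 2 < length xs" using j lxs \<phi>_def by auto
        thus ?thesis using xs(1) nth_mem by blast
      qed
    qed
    show "{u, w} \<union> T' \<subseteq> \<phi> ` ?VF"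
    proof
      fix y assume y: "y \<in> {u, w} \<union> T'"
      show "y \<in> \<phi> ` ?VF"
      proof (cases "y \<in> T'")
        case True
        then obtain i where i: "i < length xs" "xs ! i = y" using xs(1) by (metis in_set_conv_nth)
        hence "\<phi> (i + 2) = y" "i + 2 \<in> ?VF" using lxs unfolding \<phi>_def K2t_vertices_def by auto
        thus ?thesis by (metis image_eqI)
      next
        case False
        hence "y = u \<or> y = w" using y by auto
        moreover have "\<phi> 0 = u" "\<phi> 1 = w" "0 \<in> ?VF" "1 \<in> ?VF"
          unfolding \<phi>_def K2t_vertices_def by auto
        ultimately show ?thesis by (metis image_eqI)
      qed
    qed
  qed
  have phiT: "\<phi> j \<in> T'" if "2 \<le> j" "j < t + 2" for j
    using that lxs xs(1) unfolding \<phi>_def by auto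
  have injphi: "inj_on \<phi> ?VF"
  proof (rule inj_onI)
    fix i j assume ij: "i \<in> ?VF" "j \<in> ?VF" "\<phi> i = \<phi> j"
    have ltij: "i < t + 2" "j < t + 2" using ij unfolding K2t_vertices_def by auto
    show "i = j"
    proof (cases "i < 2")
      case True
      show ?thesis
      proof (cases "j < 2")
        case True
        thus ?thesis using \<open>i < 2\<close> ij(3) dist unfolding \<phi>_def by (auto split: if_splits)
      next
        case False
        hence "\<phi> j \<in> T'" using phiT ltij by auto
        moreover have "\<phi> i \<in> {u, w}" using True unfolding \<phi>_def by auto
        ultimately show ?thesis using ij(3) T'uw by auto
      qed
    next
      case False
      show ?thesis
      proof (cases "j < 2")
        case True
        have "\<phi> i \<in> T'" using phiT ltij False by auto
        moreover have "\<phi> j \<in> {u, w}" using True unfolding \<phi>_def by auto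
        ultimately show ?thesis using ij(3) T'uw by auto
      next
        case False2: False
        have "xs ! (i - 2) = xs ! (j - 2)" using ij(3) False False2 unfolding \<phi>_def by auto
        hence "i - 2 = j - 2" using xs(2) lxs ltij False False2 nth_eq_iff_index_eq by fastforce
        thus ?thesis using False False2 by auto
      qed
    qed
  qed
  have cond: "\<forall>f\<in>?EF. \<psi> f \<inter> \<phi> ` ?VF = \<phi> ` f"
  proof
    fix f assume "f \<in> ?EF"
    then obtain i j where f: "f = {i, j}" "i < 2" "2 \<le> j" "j < t + 2"
      unfolding K2t_edges_def by auto
    have mx: "Max f = j" using f by auto
    define x where "x = \<phi> j"
    have xT: "x \<in> T'" using phiT f x_def by auto
    hence xS: "x \<in> S" using T'S by auto
    show "\<psi> f \<inter> \<phi> ` ?VF = \<phi> ` f"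
    proof (cases "i = 0")
      case True
      have "\<psi> f = {u, x, g1 x}" using True f mx g1P[OF xS] unfolding \<psi>_def x_def by auto
      moreover have "g1 x \<notin> {u, w} \<union> T'" using g1P[OF xS] wN indT' xT by auto
      moreover have "\<phi> ` f = {u, x}" using True f unfolding x_def \<phi>_def by auto
      ultimately show ?thesis using img xT by auto
    next
      case False
      hence i1: "i = 1" using f by auto
      have "0 \<notin> f" using f i1 by auto
      hence "\<psi> f = {w, x, g2 x}" using f mx g2P[OF xS] unfolding \<psi>_def x_def by auto
      moreover have "g2 x \<notin> {u, w} \<union> T'" using g2P[OF xS] uN indT' xT by auto
      moreover have "\<phi> ` f = {w, x}" using i1 f unfolding x_def \<phi>_def by auto
      ultimately show ?thesis using img xT by auto
    qed
  qed
  have EFsub: "\<forall>f\<in>?EF. f \<subseteq> ?VF" unfolding K2t_edges_def K2t_vertices_def by auto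
  have injpsi: "inj_on \<psi> ?EF"
  proof (rule inj_onI)
    fix f f' assume ff: "f \<in> ?EF" "f' \<in> ?EF" "\<psi> f = \<psi> f'"
    hence "\<phi> ` f = \<phi> ` f'" using cond by metis
    thus "f = f'" using inj_on_image_eq_iff[OF injphi] EFsub ff by blast
  qed
  have psiE: "\<psi> ` ?EF \<subseteq> E"
  proof
    fix e assume "e \<in> \<psi> ` ?EF"
    then obtain f where f: "f \<in> ?EF" "e = \<psi> f" by auto
    then obtain i j where ij: "f = {i, j}" "i < 2" "2 \<le> j" "j < t + 2"
      unfolding K2t_edges_def by auto
    have "\<phi> (Max f) \<in> S" using ij phiT T'S by auto
    thus "e \<in> E" using f e1 e2 BE unfolding \<psi>_def by auto
  qed
  have phiV: "\<phi> ` ?VF \<subseteq> V"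
  proof -
    have "T' \<subseteq> V"
    proof
      fix x assume "x \<in> T'"
      hence "x \<in> S" using T'S by auto
      thus "x \<in> V" using e1 BE edges by blast
    qed
    thus ?thesis using img uV wV by auto
  qed
  have "contains_trace V E ?VF ?EF"
    unfolding contains_trace_def using injphi phiV injpsi psiE cond by blast
  thus False using assms(3) by simp
qed

end
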